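(* Let $u$ be a coherent utility on $L^0$ whose determining set $\mathcal{D}$ is $L^1$-closed and uniformly integrable, let $Y$ be a random variable or random vector, and let $W\in L^1_s(\mathsf{E}(\mathcal{D}\mid Y))$. Then $\mathcal{X}_{\mathsf{E}(\mathcal{D}\mid Y)}(W)\ne\emptyset$.
   Context: Let $(\Omega,\mathcal{F},\mathsf{P})$ be a probability space, $L^0$ the space of all real random variables, and $\mathcal{P}$ the set of probability measures on $\mathcal{F}$ absolutely continuous with respect to $\mathsf{P}$; measures are identified with their densities in $L^1(\mathsf{P})$. For $\mathsf{Q}\in\mathcal{P}$, $\mathsf{E}_\mathsf{Q}X:=\mathsf{E}_\mathsf{Q}X^+-\mathsf{E}_\mathsf{Q}X^-$ with the convention $\infty-\infty=-\infty$. A coherent utility on $L^0$ is a map $u:L^0\to[-\infty,\infty]$ of the form $u(X)=\inf_{\mathsf{Q}\in\mathcal{D}}\mathsf{E}_\mathsf{Q}X$ for a nonempty $\mathcal{D}\subseteq\mathcal{P}$; its determining set is the largest such set, $\{\mathsf{Q}\in\mathcal{P}:\mathsf{E}_\mathsf{Q}X\ge u(X)\ \forall X\in L^0\}$. For a random vector $Y$, $\mathsf{E}(\mathcal{D}\mid Y):=\{\mathsf{E}(Z\mid Y):Z\in\mathcal{D}\}$, and $u^f(X;Y):=\inf_{\mathsf{Q}\in\mathsf{E}(\mathcal{D}\mid Y)}\mathsf{E}_\mathsf{Q}X$. For $\mathcal{C}\subseteq\mathcal{P}$, $L^1_s(\mathcal{C})=\{X\in L^0:\lim_{n\to\infty}\sup_{\mathsf{Q}\in\mathcal{C}}\mathsf{E}_\mathsf{Q}|X|I(|X|>n)=0\}$.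 The set of extreme measures is $\mathcal{X}_{\mathsf{E}(\mathcal{D}\mid Y)}(W)=\{\mathsf{Q}\in\mathsf{E}(\mathcal{D}\mid Y):\mathsf{E}_\mathsf{Q}W=u^f(W;Y)\in(-\infty,\infty)\}$. *)

theory Defs
  imports "HOL-Probability.Probability"
begin

text \<open>Measures absolutely continuous w.r.t. the reference probability M, identified with densities.\<close>
definition Pset :: "'a measure \<Rightarrow> ('a \<Rightarrow> real) set" where
  "Pset M = {Z. Z \<in> borel_measurable M \<and> (AE x in M. 0 \<le> Z x) \<and> integrable M Z \<and> integral\<^sup>L M Z = 1}"

text \<open>E_Q X = E_Q X^+ - E_Q X^-, with the convention inf - inf = -inf.\<close>
definition EQ :: "'a measure \<Rightarrow> ('a \<Rightarrow> real) \<Rightarrow> ('a \<Rightarrow> real) \<Rightarrow> ereal" where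
  "EQ M Z X =
    (let p = (\<integral>\<^sup>+ x. ennreal (Z x * max (X x) 0) \<partial>M);
         n = (\<integral>\<^sup>+ x. ennreal (Z x * max (- X x) 0) \<partial>M)
     in if p = \<infinity> \<and> n = \<infinity> then - \<infinity> else enn2ereal p - enn2ereal n)"

definition coherent_utility :: "'a measure \<Rightarrow> (('a \<Rightarrow> real) \<Rightarrow> ereal) \<Rightarrow> bool" where
  "coherent_utility M u \<longleftrightarrow>
     (\<exists>D. D \<noteq> {} \<and> D \<subseteq> Pset M \<and> (\<forall>X \<in> borel_measurable M. u X = (INF Q\<in>D. EQ M Q X)))"

definition determining_set :: "'a measure \<Rightarrow> (('a \<Rightarrow> real) \<Rightarrow> ereal) \<Rightarrow> ('a \<Rightarrow> real) set" where
  "determining_set M u = {Q \<in> Pset M. \<forall>X \<in> borel_measurable M. u X \<le> EQ M Q X}"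

text \<open>Closedness in L^1(P) (the sets considered are closed under a.e. modification).\<close>
definition L1_closed :: "'a measure \<Rightarrow> ('a \<Rightarrow> real) set \<Rightarrow> bool" where
  "L1_closed M D \<longleftrightarrow>
     (\<forall>Zs f. (\<forall>k. Zs k \<in> D) \<and> f \<in> borel_measurable M \<and>
        (\<lambda>k. \<integral>\<^sup>+ x. ennreal \<bar>Zs k x - f x\<bar> \<partial>M) \<longlonglongrightarrow> 0 \<longrightarrow> f \<in> D)"

definition unif_integrable :: "'a measure \<Rightarrow> ('a \<Rightarrow> real) set \<Rightarrow> bool" where
  "unif_integrable M D \<longleftrightarrow>
     (\<lambda>n::nat. SUP Z\<in>D. \<integral>\<^sup>+ x. ennreal (\<bar>Z x\<bar> * indicator {y. \<bar>Z y\<bar> > real n} x) \<partial>M)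
       \<longlonglongrightarrow> 0"

definition L1s :: "'a measure \<Rightarrow> ('a \<Rightarrow> real) set \<Rightarrow> ('a \<Rightarrow> real) set" where
  "L1s M C = {X \<in> borel_measurable M.
     (\<lambda>n::nat. SUP Q\<in>C. \<integral>\<^sup>+ x. ennreal (Q x * \<bar>X x\<bar> * indicator {y. \<bar>X y\<bar> > real n} x) \<partial>M)
       \<longlonglongrightarrow> 0}"

definition cond_set :: "'a measure \<Rightarrow> ('a \<Rightarrow> real) set \<Rightarrow> ('a \<Rightarrow> 'b::euclidean_space) \<Rightarrow> ('a \<Rightarrow> real) set" where
  "cond_set M D Y = (\<lambda>Z. real_cond_exp M (vimage_algebra (space M) Y borel) Z) ` D"

definition uf :: "'a measure \<Rightarrow> ('a \<Rightarrow> real) set \<Rightarrow> ('a \<Rightarrow> real) \<Rightarrow> ('a \<Rightarrow> 'b::euclidean_space) \<Rightarrow> ereal" where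
  "uf M D X Y = (INF Q\<in>cond_set M D Y. EQ M Q X)"

definition extreme_set :: "'a measure \<Rightarrow> ('a \<Rightarrow> real) set \<Rightarrow> ('a \<Rightarrow> 'b::euclidean_space) \<Rightarrow> ('a \<Rightarrow> real) \<Rightarrow> ('a \<Rightarrow> real) set" where
  "extreme_set M D Y W = {Q \<in> cond_set M D Y. EQ M Q W = uf M D W Y \<and> \<bar>uf M D W Y\<bar> \<noteq> \<infinity>}"

end

theory Submission imports Defs begin

lemma EQ_alt: "EQ M Z X = (if (\<integral>\<^sup>+ x. ennreal (Z x * max (X x) 0) \<partial>M) = \<infinity> \<and> (\<integral>\<^sup>+ x. ennreal (Z x * max (- X x) 0) \<partial>M) = \<infinity> then - \<infinity>
   else enn2ereal (\<integral>\<^sup>+ x. ennreal (Z x * max (X x) 0) \<partial>M) - enn2ereal (\<integral>\<^sup>+ x. ennreal (Z x * max (- X x) 0) \<partial>M))"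
  by (simp add: EQ_def Let_def)

lemma I_mid:
  assumes Z1: "Z1 \<in> Pset M" and Z2: "Z2 \<in> Pset M"
    and t[measurable]: "t \<in> borel_measurable M" and t0: "\<And>x. t x \<ge> 0"
  shows "(\<integral>\<^sup>+ x. ennreal ((Z1 x + Z2 x) / 2 * t x) \<partial>M) + (\<integral>\<^sup>+ x. ennreal ((Z1 x + Z2 x) / 2 * t x) \<partial>M)
       = (\<integral>\<^sup>+ x. ennreal (Z1 x * t x) \<partial>M) + (\<integral>\<^sup>+ x. ennreal (Z2 x * t x) \<partial>M)"
proof -
  have [measurable]: "Z1 \<in> borel_measurable M" "Z2 \<in> borel_measurable M" using Z1 Z2 by (auto simp: Pset_def)
  have p1: "AE x in M. 0 \<le> Z1 x" and p2: "AE x in M. 0 \<le> Z2 x" using Z1 Z2 by (auto simp: Pset_def)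
  have "(\<integral>\<^sup>+ x. ennreal ((Z1 x + Z2 x) / 2 * t x) \<partial>M) + (\<integral>\<^sup>+ x. ennreal ((Z1 x + Z2 x) / 2 * t x) \<partial>M)
      = (\<integral>\<^sup>+ x. ennreal ((Z1 x + Z2 x) / 2 * t x) + ennreal ((Z1 x + Z2 x) / 2 * t x) \<partial>M)"
    by (rule nn_integral_add[symmetric]) auto
  also have "\<dots> = (\<integral>\<^sup>+ x. ennreal (Z1 x * t x) + ennreal (Z2 x * t x) \<partial>M)"
  proof (rule nn_integral_cong_AE)
    show "AE x in M. ennreal ((Z1 x + Z2 x) / 2 * t x) + ennreal ((Z1 x + Z2 x) / 2 * t x) = ennreal (Z1 x * t x) + ennreal (Z2 x * t x)"
      using p1 p2
    proof eventually_elim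
      case (elim x)
      have a: "0 \<le> (Z1 x + Z2 x) / 2 * t x" using elim t0[of x] by simp
      have b: "0 \<le> Z1 x * t x" "0 \<le> Z2 x * t x" using elim t0[of x] by simp_all
      have "ennreal ((Z1 x + Z2 x) / 2 * t x) + ennreal ((Z1 x + Z2 x) / 2 * t x) = ennreal ((Z1 x + Z2 x) / 2 * t x + (Z1 x + Z2 x) / 2 * t x)"
        by (rule ennreal_plus[symmetric]) (use a in auto)
      also have "(Z1 x + Z2 x) / 2 * t x + (Z1 x + Z2 x) / 2 * t x = Z1 x * t x + Z2 x * t x"
        by (simp add: field_simps)
      also have "ennreal (Z1 x * t x + Z2 x * t x) = ennreal (Z1 x * t x) + ennreal (Z2 x * t x)"
        by (rule ennreal_plus) (use b in auto)
      finally show ?case .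
    qed
  qed
  also have "\<dots> = (\<integral>\<^sup>+ x. ennreal (Z1 x * t x) \<partial>M) + (\<integral>\<^sup>+ x. ennreal (Z2 x * t x) \<partial>M)"
    by (rule nn_integral_add) auto
  finally show ?thesis .
qed

lemma EQ_neg_inf:
  assumes "(\<integral>\<^sup>+ x. ennreal (Z x * max (- X x) 0) \<partial>M) = \<infinity>"
  shows "EQ M Z X = - \<infinity>"
  using assms unfolding EQ_alt by (cases "(\<integral>\<^sup>+ x. ennreal (Z x * max (X x) 0) \<partial>M)") auto

lemma ennreal_double_top: "(a::ennreal) + a = b + c \<Longrightarrow> (a = \<infinity> \<longleftrightarrow> b = \<infinity> \<or> c = \<infinity>)"
  by (metis add_top ennreal_add_eq_top infinity_ennreal_def)

lemma Pset_mid: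
  assumes Z1: "Z1 \<in> Pset M" and Z2: "Z2 \<in> Pset M"
  shows "(\<lambda>x. (Z1 x + Z2 x) / 2) \<in> Pset M"
  using assms unfolding Pset_def by auto

lemma det_mid:
  assumes Z1: "Z1 \<in> determining_set M u" and Z2: "Z2 \<in> determining_set M u"
  shows "(\<lambda>x. (Z1 x + Z2 x) / 2) \<in> determining_set M u"
proof -
  have P1: "Z1 \<in> Pset M" and P2: "Z2 \<in> Pset M" using assms by (auto simp: determining_set_def)
  have "u X \<le> EQ M (\<lambda>x. (Z1 x + Z2 x) / 2) X" if X[measurable]: "X \<in> borel_measurable M" for X
  proof -
    have u1: "u X \<le> EQ M Z1 X" and u2: "u X \<le> EQ M Z2 X" using assms X by (auto simp: determining_set_def)
    define p where "p = (\<integral>\<^sup>+ x. ennreal ((Z1 x + Z2 x) / 2 * max (X x) 0) \<partial>M)"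
    define n where "n = (\<integral>\<^sup>+ x. ennreal ((Z1 x + Z2 x) / 2 * max (- X x) 0) \<partial>M)"
    define p1 where "p1 = (\<integral>\<^sup>+ x. ennreal (Z1 x * max (X x) 0) \<partial>M)"
    define n1 where "n1 = (\<integral>\<^sup>+ x. ennreal (Z1 x * max (- X x) 0) \<partial>M)"
    define p2 where "p2 = (\<integral>\<^sup>+ x. ennreal (Z2 x * max (X x) 0) \<partial>M)"
    define n2 where "n2 = (\<integral>\<^sup>+ x. ennreal (Z2 x * max (- X x) 0) \<partial>M)"
    have pp: "p + p = p1 + p2" unfolding p_def p1_def p2_def
      by (rule I_mid[OF P1 P2]) auto
    have nn: "n + n = n1 + n2" unfolding n_def n1_def n2_def
      by (rule I_mid[OF P1 P2]) auto
    have E: "EQ M (\<lambda>x. (Z1 x + Z2 x) / 2) X = (if p = \<infinity> \<and> n = \<infinity> then - \<infinity> else enn2ereal p - enn2ereal n)"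
      unfolding EQ_alt p_def n_def ..
    have E1: "EQ M Z1 X = (if p1 = \<infinity> \<and> n1 = \<infinity> then - \<infinity> else enn2ereal p1 - enn2ereal n1)"
      unfolding EQ_alt p1_def n1_def ..
    have E2: "EQ M Z2 X = (if p2 = \<infinity> \<and> n2 = \<infinity> then - \<infinity> else enn2ereal p2 - enn2ereal n2)"
      unfolding EQ_alt p2_def n2_def ..
    show ?thesis
    proof (cases "n = \<infinity>")
      case True
      then have "n1 = \<infinity> \<or> n2 = \<infinity>" using ennreal_double_top[OF nn] by simp
      then have "EQ M Z1 X = - \<infinity> \<or> EQ M Z2 X = - \<infinity>"
        using EQ_neg_inf[where Z=Z1 and X=X and M=M] EQ_neg_inf[where Z=Z2 and X=X and M=M] unfolding n1_def n2_def by auto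
      then have "u X = - \<infinity>" using u1 u2 by auto
      then show ?thesis by simp
    next
      case nfin: False
      then have n1f: "n1 \<noteq> \<infinity>" and n2f: "n2 \<noteq> \<infinity>" using ennreal_double_top[OF nn] by auto
      show ?thesis
      proof (cases "p = \<infinity>")
        case True
        then have "EQ M (\<lambda>x. (Z1 x + Z2 x) / 2) X = \<infinity>" using E nfin
          by (cases n) auto
        then show ?thesis by simp
      next
        case pfin: False
        then have p1f: "p1 \<noteq> \<infinity>" and p2f: "p2 \<noteq> \<infinity>" using ennreal_double_top[OF pp] by auto
        obtain a where a: "p = ennreal a" "a \<ge> 0" using pfin by (cases p) auto
        obtain b where b: "n = ennreal b" "b \<ge> 0" using nfin by (cases n) auto
        obtain a1 where a1: "p1 = ennreal a1" "a1 \<ge> 0" using p1f by (cases p1) auto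
        obtain b1 where b1: "n1 = ennreal b1" "b1 \<ge> 0" using n1f by (cases n1) auto
        obtain a2 where a2: "p2 = ennreal a2" "a2 \<ge> 0" using p2f by (cases p2) auto
        obtain b2 where b2: "n2 = ennreal b2" "b2 \<ge> 0" using n2f by (cases n2) auto
        have "ennreal (a + a) = ennreal (a1 + a2)" using pp a a1 a2 by (simp only: ennreal_plus)
        then have aa: "a + a = a1 + a2" by (subst (asm) ennreal_inj) (use a a1 a2 in auto)
        have "ennreal (b + b) = ennreal (b1 + b2)" using nn b b1 b2 by (simp only: ennreal_plus)
        then have bb: "b + b = b1 + b2" by (subst (asm) ennreal_inj) (use b b1 b2 in auto)
        have Em: "EQ M (\<lambda>x. (Z1 x + Z2 x) / 2) X = ereal (a - b)" using E a b by simp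
        have "EQ M Z1 X = ereal (a1 - b1)" using E1 a1 b1 by simp
        then have "u X \<le> ereal (a1 - b1)" using u1 by simp
        moreover have "EQ M Z2 X = ereal (a2 - b2)" using E2 a2 b2 by simp
        then have "u X \<le> ereal (a2 - b2)" using u2 by simp
        ultimately have U: "u X \<le> ereal (a1 - b1)" "u X \<le> ereal (a2 - b2)" by auto
        have "a1 - b1 \<le> a - b \<or> a2 - b2 \<le> a - b" using aa bb by linarith
        then have "u X \<le> ereal (a - b)"
        proof
          assume "a1 - b1 \<le> a - b"
          then show ?thesis using U(1) by (meson ereal_less_eq(3) order_trans)
        next
          assume "a2 - b2 \<le> a - b"
          then show ?thesis using U(2) by (meson ereal_less_eq(3) order_trans)
        qed
        then show ?thesis using Em by simp
      qed
    qed
  qed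
  then show ?thesis using Pset_mid[OF P1 P2] by (simp add: determining_set_def)
qed

lemma ennreal_tendsto_0I:
  fixes X :: "nat \<Rightarrow> ennreal"
  assumes "\<And>e. e > 0 \<Longrightarrow> \<exists>n. \<forall>i\<ge>n. X i \<le> ennreal e"
  shows "X \<longlonglongrightarrow> 0"
proof (rule order_tendstoI)
  fix a :: ennreal assume "a < 0" then show "eventually (\<lambda>i. a < X i) sequentially" by simp
next
  fix a :: ennreal assume a: "0 < a"
  obtain b where b: "0 < b" "b < a" using dense[OF a] by blast
  then have bt: "b \<noteq> top" using top.not_eq_extremum by fastforce
  define e where "e = enn2real b"
  have be: "ennreal e = b" using bt by (simp add: e_def ennreal_enn2real_if)
  have e0: "e > 0" using b bt by (simp add: e_def enn2real_positive_iff top.not_eq_extremum)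
  obtain n where n: "\<forall>i\<ge>n. X i \<le> ennreal e" using assms[OF e0] by blast
  show "eventually (\<lambda>i. X i < a) sequentially"
    unfolding eventually_sequentially using n b be by (metis le_less_trans)
qed

lemma L1_complete_subseq:
  fixes s :: "nat \<Rightarrow> 'a \<Rightarrow> real"
  assumes int[measurable]: "\<And>n. integrable M (s n)"
    and cau: "\<And>e. e > 0 \<Longrightarrow> \<exists>N. \<forall>i\<ge>N. \<forall>j\<ge>N. (\<integral>x. \<bar>s i x - s j x\<bar> \<partial>M) < e"
  obtains r f where "strict_mono r" "f \<in> borel_measurable M"
    "(\<lambda>k. \<integral>\<^sup>+ x. ennreal \<bar>s (r k) x - f x\<bar> \<partial>M) \<longlonglongrightarrow> 0"
proof -
  have cau': "\<And>e. e > 0 \<Longrightarrow> \<exists>N. \<forall>i\<ge>N. \<forall>j\<ge>N. LINT x|M. norm (s i x - s j x) < e"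
    using cau by simp
  obtain r where r: "strict_mono r" and ae: "AE x in M. Cauchy (\<lambda>i. s (r i) x)"
    using cauchy_L1_AE_cauchy_subseq[OF int cau'] by blast
  define f where "f x = lim (\<lambda>i. s (r i) x)" for x
  have fm[measurable]: "f \<in> borel_measurable M" unfolding f_def
    by (rule borel_measurable_lim_metric) (use int in auto)
  have conv: "AE x in M. (\<lambda>i. s (r i) x) \<longlonglongrightarrow> f x"
    using ae by eventually_elim (simp add: f_def Cauchy_convergent_iff convergent_LIMSEQ_iff)
  have sm[measurable]: "\<And>n. s n \<in> borel_measurable M" using int by auto
  have bound: "\<exists>n. \<forall>i\<ge>n. (\<integral>\<^sup>+ x. ennreal \<bar>s (r i) x - f x\<bar> \<partial>M) \<le> ennreal e" if e0: "e > 0" for e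
  proof -
    obtain N where N: "\<forall>i\<ge>N. \<forall>j\<ge>N. (\<integral>x. \<bar>s i x - s j x\<bar> \<partial>M) < e" using cau[OF e0] by blast
    have "\<forall>i\<ge>N. (\<integral>\<^sup>+ x. ennreal \<bar>s (r i) x - f x\<bar> \<partial>M) \<le> ennreal e"
    proof (intro allI impI)
      fix i assume iN: "i \<ge> N"
      have ri: "r i \<ge> N" using iN seq_suble[OF r, of i] by linarith
      have "(\<integral>\<^sup>+ x. ennreal \<bar>s (r i) x - f x\<bar> \<partial>M) = (\<integral>\<^sup>+ x. liminf (\<lambda>j. ennreal \<bar>s (r i) x - s (r j) x\<bar>) \<partial>M)"
      proof (rule nn_integral_cong_AE)
        show "AE x in M. ennreal \<bar>s (r i) x - f x\<bar> = liminf (\<lambda>j. ennreal \<bar>s (r i) x - s (r j) x\<bar>)"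
          using conv
        proof eventually_elim
          case (elim x)
          have "(\<lambda>j. ennreal \<bar>s (r i) x - s (r j) x\<bar>) \<longlonglongrightarrow> ennreal \<bar>s (r i) x - f x\<bar>"
            by (intro tendsto_ennrealI tendsto_intros elim)
          then show ?case by (metis lim_imp_Liminf trivial_limit_sequentially)
        qed
      qed
      also have "\<dots> \<le> liminf (\<lambda>j. \<integral>\<^sup>+ x. ennreal \<bar>s (r i) x - s (r j) x\<bar> \<partial>M)"
        by (rule nn_integral_liminf) simp
      also have "\<dots> \<le> liminf (\<lambda>j. ennreal e)"
      proof (rule Liminf_mono)
        show "eventually (\<lambda>j. (\<integral>\<^sup>+ x. ennreal \<bar>s (r i) x - s (r j) x\<bar> \<partial>M) \<le> ennreal e) sequentially"
          unfolding eventually_sequentially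
        proof (intro exI[of _ N] allI impI)
          fix j assume jN: "j \<ge> N"
          have rj: "r j \<ge> N" using jN seq_suble[OF r, of j] by linarith
          have "(\<integral>\<^sup>+ x. ennreal \<bar>s (r i) x - s (r j) x\<bar> \<partial>M) = ennreal (\<integral>x. \<bar>s (r i) x - s (r j) x\<bar> \<partial>M)"
            by (intro nn_integral_eq_integral) (use int[of "r i"] int[of "r j"] in auto)
          also have "\<dots> \<le> ennreal e" using N ri rj by (intro ennreal_leI) (auto intro: less_imp_le)
          finally show "(\<integral>\<^sup>+ x. ennreal \<bar>s (r i) x - s (r j) x\<bar> \<partial>M) \<le> ennreal e" .
        qed
      qed
      also have "\<dots> = ennreal e" by (simp add: Liminf_const)
      finally show "(\<integral>\<^sup>+ x. ennreal \<bar>s (r i) x - f x\<bar> \<partial>M) \<le> ennreal e" .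
    qed
    then show ?thesis by blast
  qed
  have "(\<lambda>k. \<integral>\<^sup>+ x. ennreal \<bar>s (r k) x - f x\<bar> \<partial>M) \<longlonglongrightarrow> 0"
    by (rule ennreal_tendsto_0I) (use bound in blast)
  with r fm show ?thesis using that by blast
qed


definition hf :: "real \<Rightarrow> real" where "hf t = 1 / (1 + max t 0)"
definition gg :: "real \<Rightarrow> real \<Rightarrow> real" where "gg a b = (hf a + hf b) / 2 - hf ((a + b) / 2)"

lemma frac_id:
  fixes p q :: real
  assumes "p > 0" "q > 0"
  shows "(1 / p + 1 / q) / 2 - 2 / (p + q) = (p - q)^2 / (2 * p * q * (p + q))"
proof -
  have "p + q \<noteq> 0" "p \<noteq> 0" "q \<noteq> 0" using assms by auto
  then show ?thesis by (simp add: field_simps power2_eq_square)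
qed

lemma gg_formula:
  assumes "a \<ge> 0" "b \<ge> 0"
  shows "gg a b = (a - b)^2 / (2 * (1 + a) * (1 + b) * (2 + a + b))"
proof -
  have m: "max a 0 = a" "max b 0 = b" "max ((a + b) / 2) 0 = (a + b) / 2" using assms by auto
  have nz1: "1 + a \<noteq> 0" using assms by linarith
  have nz2: "1 + b \<noteq> 0" using assms by linarith
  have nz3: "2 + a + b \<noteq> 0" using assms by linarith
  have "(a + b) / 2 \<ge> 0" using assms by simp
  then have nz4: "1 + (a + b) / 2 \<noteq> 0" by linarith
  note nz = nz1 nz2 nz3 nz4
  have "gg a b = (1 / (1 + a) + 1 / (1 + b)) / 2 - 1 / (1 + (a + b) / 2)"
    unfolding gg_def hf_def m ..
  also have "1 / (1 + (a + b) / 2) = 2 / (2 + a + b)" using nz by (simp add: field_simps)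
  also have "(1 / (1 + a) + 1 / (1 + b)) / 2 - 2 / (2 + a + b) = (a - b)^2 / (2 * (1 + a) * (1 + b) * (2 + a + b))"
    using frac_id[of "1 + a" "1 + b"] assms by (simp add: add.assoc add.left_commute)
  finally show ?thesis .
qed

lemma gg_nonneg: "a \<ge> 0 \<Longrightarrow> b \<ge> 0 \<Longrightarrow> gg a b \<ge> 0"
  by (simp add: gg_formula)

lemma key_pointwise:
  assumes "a \<ge> 0" "b \<ge> 0" "K \<ge> 0" "d > 0"
  shows "\<bar>a - b\<bar> \<le> \<bar>a\<bar> * (if \<bar>a\<bar> > K then 1 else 0) + \<bar>b\<bar> * (if \<bar>b\<bar> > K then 1 else 0) + d + 4 * (1 + K)^3 / d * gg a b"
proof -
  have g0: "gg a b \<ge> 0" using gg_nonneg assms by auto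
  have r0: "4 * (1 + K)^3 / d * gg a b \<ge> 0" using g0 assms by simp
  show ?thesis
  proof (cases "a > K \<or> b > K")
    case True
    then show ?thesis using assms r0 by auto
  next
    case False
    then have aK: "a \<le> K" and bK: "b \<le> K" by auto
    have den: "2 * (1 + a) * (1 + b) * (2 + a + b) \<le> 4 * (1 + K)^3"
    proof -
      have "(1 + a) * (1 + b) \<le> (1 + K) * (1 + K)" using assms aK bK by (intro mult_mono) auto
      moreover have "2 + a + b \<le> 2 * (1 + K)" using aK bK by simp
      ultimately have "((1 + a) * (1 + b)) * (2 + a + b) \<le> ((1 + K) * (1 + K)) * (2 * (1 + K))"
        by (rule mult_mono) (use assms in auto)
      then show ?thesis by (simp add: power3_eq_cube algebra_simps)
    qed
    have dpos: "2 * (1 + a) * (1 + b) * (2 + a + b) > 0" using assms by simp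
    have sq: "(a - b)^2 \<le> 4 * (1 + K)^3 * gg a b"
    proof -
      have "(a - b)^2 = 2 * (1 + a) * (1 + b) * (2 + a + b) * gg a b"
      proof -
        have "1 + a > 0" "1 + b > 0" "2 + a + b > 0" using assms by linarith+
        then show ?thesis by (simp add: gg_formula assms)
      qed
      also have "\<dots> \<le> 4 * (1 + K)^3 * gg a b" using den g0 by (rule mult_right_mono)
      finally show ?thesis .
    qed
    have "\<bar>a - b\<bar> \<le> d + (a - b)^2 / d"
    proof (cases "\<bar>a - b\<bar> \<le> d")
      case True
      then show ?thesis using assms by (simp add: add_increasing2)
    next
      case False
      then have "\<bar>a - b\<bar> * d \<le> \<bar>a - b\<bar> * \<bar>a - b\<bar>" by (intro mult_left_mono) auto
      then have "\<bar>a - b\<bar> \<le> (a - b)^2 / d" using assms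
        by (simp add: field_simps power2_eq_square abs_mult_self_eq)
      then show ?thesis using assms by linarith
    qed
    also have "\<dots> \<le> d + 4 * (1 + K)^3 / d * gg a b"
      using sq assms by (simp add: divide_right_mono field_simps)
    finally show ?thesis using assms aK bK by auto
  qed
qed

lemma ennreal_less_imp: "ennreal x < ennreal e \<Longrightarrow> x < e"
  by (metis ennreal_leI not_le)

locale S = finite_measure_subalgebra M F for M F +
  fixes D :: "('a \<Rightarrow> real) set" and W :: "'a \<Rightarrow> real"
  assumes prob: "prob_space M"
    and D_sub: "D \<subseteq> Pset M" and D_ne: "D \<noteq> {}"
    and D_mid: "\<And>Z1 Z2. Z1 \<in> D \<Longrightarrow> Z2 \<in> D \<Longrightarrow> (\<lambda>x. (Z1 x + Z2 x) / 2) \<in> D"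
    and D_closed: "L1_closed M D"
    and D_UI: "unif_integrable M D"
    and W_meas[measurable]: "W \<in> borel_measurable M"
    and W_tail: "(\<lambda>n::nat. SUP Z\<in>D. \<integral>\<^sup>+ x. ennreal (real_cond_exp M F Z x * \<bar>W x\<bar> * indicator {y. \<bar>W y\<bar> > real n} x) \<partial>M) \<longlonglongrightarrow> 0"
begin

sublocale P: prob_space M by (rule prob)

abbreviation Q where "Q Z \<equiv> real_cond_exp M F Z"

lemma DZ:
  assumes "Z \<in> D"
  shows "Z \<in> borel_measurable M" "integrable M Z" "AE x in M. 0 \<le> Z x" "integral\<^sup>L M Z = 1"
  using assms D_sub unfolding Pset_def by auto

lemma DQ:
  assumes "Z \<in> D"
  shows "Q Z \<in> borel_measurable M" "integrable M (Q Z)" "AE x in M. 0 \<le> Q Z x" "integral\<^sup>L M (Q Z) = 1"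
  using DZ[OF assms] real_cond_exp_int[of Z] real_cond_exp_pos[of Z] by auto

lemma tail_enn:
  assumes "e > 0"
  shows "\<exists>N::nat. \<forall>Z\<in>D. (\<integral>\<^sup>+ x. ennreal (Q Z x * \<bar>W x\<bar> * indicator {y. \<bar>W y\<bar> > real N} x) \<partial>M) < ennreal e"
proof -
  have "eventually (\<lambda>n::nat. (SUP Z\<in>D. \<integral>\<^sup>+ x. ennreal (Q Z x * \<bar>W x\<bar> * indicator {y. \<bar>W y\<bar> > real n} x) \<partial>M) < ennreal e) sequentially"
    using order_tendstoD(2)[OF W_tail] assms by simp
  then obtain N where NN: "(SUP Z\<in>D. \<integral>\<^sup>+ x. ennreal (Q Z x * \<bar>W x\<bar> * indicator {y. \<bar>W y\<bar> > real N} x) \<partial>M) < ennreal e"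
    by (auto simp: eventually_sequentially)
  have "\<forall>Z\<in>D. (\<integral>\<^sup>+ x. ennreal (Q Z x * \<bar>W x\<bar> * indicator {y. \<bar>W y\<bar> > real N} x) \<partial>M) < ennreal e"
  proof
    fix Z assume Z: "Z \<in> D"
    show "(\<integral>\<^sup>+ x. ennreal (Q Z x * \<bar>W x\<bar> * indicator {y. \<bar>W y\<bar> > real N} x) \<partial>M) < ennreal e"
      by (rule le_less_trans[OF SUP_upper[OF Z] NN])
  qed
  then show ?thesis by blast
qed

lemma tail_int:
  assumes "Z \<in> D"
    and fin: "(\<integral>\<^sup>+ x. ennreal (Q Z x * \<bar>W x\<bar> * indicator {y. \<bar>W y\<bar> > real N} x) \<partial>M) < ennreal e"
  shows "integrable M (\<lambda>x. Q Z x * W x)"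
    "integrable M (\<lambda>x. Q Z x * \<bar>W x\<bar> * indicator {y. \<bar>W y\<bar> > real N} x)"
    "(\<integral>x. Q Z x * \<bar>W x\<bar> * indicator {y. \<bar>W y\<bar> > real N} x \<partial>M) < e"
    "(\<integral>x. \<bar>Q Z x * W x\<bar> \<partial>M) < real N + e"
proof -
  note [measurable] = DQ(1)[OF assms(1)]
  have pos: "AE x in M. 0 \<le> Q Z x" using DQ(3)[OF assms(1)] .
  have e0: "e > 0"
  proof (rule ccontr)
    assume "\<not> e > 0"
    then have "ennreal e = 0" by (simp add: ennreal_eq_0_iff)
    with fin show False by simp
  qed
  have ae1: "AE x in M. ennreal (norm (Q Z x * W x)) \<le> ennreal (real N * Q Z x) + ennreal (Q Z x * \<bar>W x\<bar> * indicator {y. \<bar>W y\<bar> > real N} x)"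
    using pos
  proof eventually_elim
    case (elim x)
    show ?case
    proof (cases "\<bar>W x\<bar> > real N")
      case True
      then show ?thesis using elim by (simp add: abs_mult ennreal_plus[symmetric] del: ennreal_plus)
    next
      case False
      then have "\<bar>Q Z x * W x\<bar> \<le> real N * Q Z x" using elim
        by (simp add: abs_mult mult.commute mult_right_mono)
      then show ?thesis using False by (auto intro: order_trans[OF ennreal_leI] simp: add_increasing2)
    qed
  qed
  have "(\<integral>\<^sup>+ x. ennreal (norm (Q Z x * W x)) \<partial>M) \<le> (\<integral>\<^sup>+ x. ennreal (real N * Q Z x) + ennreal (Q Z x * \<bar>W x\<bar> * indicator {y. \<bar>W y\<bar> > real N} x) \<partial>M)"
    by (rule nn_integral_mono_AE[OF ae1])
  also have "\<dots> = (\<integral>\<^sup>+ x. ennreal (real N * Q Z x) \<partial>M) + (\<integral>\<^sup>+ x. ennreal (Q Z x * \<bar>W x\<bar> * indicator {y. \<bar>W y\<bar> > real N} x) \<partial>M)"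
    by (rule nn_integral_add) auto
  also have "(\<integral>\<^sup>+ x. ennreal (real N * Q Z x) \<partial>M) = ennreal (real N)"
  proof -
    have "(\<integral>\<^sup>+ x. ennreal (real N * Q Z x) \<partial>M) = ennreal (\<integral>x. real N * Q Z x \<partial>M)"
      using pos DQ(2)[OF assms(1)] by (intro nn_integral_eq_integral) auto
    then show ?thesis using DQ(4)[OF assms(1)] by simp
  qed
  finally have bnd0: "(\<integral>\<^sup>+ x. ennreal (norm (Q Z x * W x)) \<partial>M) \<le> ennreal (real N) + (\<integral>\<^sup>+ x. ennreal (Q Z x * \<bar>W x\<bar> * indicator {y. \<bar>W y\<bar> > real N} x) \<partial>M)" .
  have "ennreal (real N) + (\<integral>\<^sup>+ x. ennreal (Q Z x * \<bar>W x\<bar> * indicator {y. \<bar>W y\<bar> > real N} x) \<partial>M) < ennreal (real N) + ennreal e"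
    using fin by (simp add: ennreal_add_left_cancel_less)
  with bnd0 have bnd: "(\<integral>\<^sup>+ x. ennreal (norm (Q Z x * W x)) \<partial>M) < ennreal (real N) + ennreal e"
    by (rule le_less_trans)
  show int1: "integrable M (\<lambda>x. Q Z x * W x)"
    using bnd by (intro integrableI_bounded) (auto intro: order.strict_trans simp: ennreal_plus[symmetric] simp del: ennreal_plus)
  show int2: "integrable M (\<lambda>x. Q Z x * \<bar>W x\<bar> * indicator {y. \<bar>W y\<bar> > real N} x)"
    by (rule Bochner_Integration.integrable_bound[OF integrable_norm[OF int1]]) (auto simp: abs_mult indicator_def)
  have "ennreal (\<integral>x. Q Z x * \<bar>W x\<bar> * indicator {y. \<bar>W y\<bar> > real N} x \<partial>M) = (\<integral>\<^sup>+ x. ennreal (Q Z x * \<bar>W x\<bar> * indicator {y. \<bar>W y\<bar> > real N} x) \<partial>M)"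
    using pos int2 by (intro nn_integral_eq_integral[symmetric]) (auto elim!: eventually_mono)
  with fin show "(\<integral>x. Q Z x * \<bar>W x\<bar> * indicator {y. \<bar>W y\<bar> > real N} x \<partial>M) < e"
    by (intro ennreal_less_imp) simp
  have "ennreal (\<integral>x. \<bar>Q Z x * W x\<bar> \<partial>M) = (\<integral>\<^sup>+ x. ennreal (norm (Q Z x * W x)) \<partial>M)"
    using int1 by (subst nn_integral_eq_integral) auto
  also have "\<dots> < ennreal (real N + e)"
    using bnd e0 by (subst ennreal_plus) auto
  finally show "(\<integral>x. \<bar>Q Z x * W x\<bar> \<partial>M) < real N + e"
    by (rule ennreal_less_imp)
qed


definition phi where "phi Z = (\<integral>x. Q Z x * W x \<partial>M)"

lemma int_QW: assumes "Z \<in> D" shows "integrable M (\<lambda>x. Q Z x * W x)"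
proof -
  obtain N where N: "\<forall>Z\<in>D. (\<integral>\<^sup>+ x. ennreal (Q Z x * \<bar>W x\<bar> * indicator {y. \<bar>W y\<bar> > real N} x) \<partial>M) < ennreal 1"
    using tail_enn[of 1] by auto
  show ?thesis by (rule tail_int(1)[OF assms N[rule_format, OF assms]])
qed

lemma phi_bound: "\<exists>B. \<forall>Z\<in>D. \<bar>phi Z\<bar> \<le> B"
proof -
  obtain N where N: "\<forall>Z\<in>D. (\<integral>\<^sup>+ x. ennreal (Q Z x * \<bar>W x\<bar> * indicator {y. \<bar>W y\<bar> > real N} x) \<partial>M) < ennreal 1"
    using tail_enn[of 1] by auto
  show ?thesis
  proof (intro exI ballI)
    fix Z assume Z: "Z \<in> D"
    have "\<bar>phi Z\<bar> \<le> (\<integral>x. \<bar>Q Z x * W x\<bar> \<partial>M)"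
      unfolding phi_def by (rule integral_abs_bound)
    also have "\<dots> \<le> real N + 1" using tail_int(4)[OF Z N[rule_format, OF Z]] by simp
    finally show "\<bar>phi Z\<bar> \<le> real N + 1" .
  qed
qed

lemma Q_L1:
  assumes "integrable M g"
  shows "(\<integral>x. \<bar>Q g x\<bar> \<partial>M) \<le> (\<integral>x. \<bar>g x\<bar> \<partial>M)"
proof -
  note [measurable] = borel_measurable_integrable[OF assms]
  have "ennreal (\<integral>x. \<bar>Q g x\<bar> \<partial>M) = (\<integral>\<^sup>+ x. ennreal \<bar>Q g x\<bar> \<partial>M)"
    using real_cond_exp_int(1)[OF assms] by (subst nn_integral_eq_integral) auto
  also have "\<dots> \<le> (\<integral>\<^sup>+ x. nn_cond_exp M F (\<lambda>x. ennreal \<bar>g x\<bar>) x \<partial>M)"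
    by (rule nn_integral_mono_AE) (use real_cond_exp_abs[of g] in auto)
  also have "\<dots> = (\<integral>\<^sup>+ x. 1 * nn_cond_exp M F (\<lambda>x. ennreal \<bar>g x\<bar>) x \<partial>M)" by simp
  also have "\<dots> = (\<integral>\<^sup>+ x. 1 * ennreal \<bar>g x\<bar> \<partial>M)"
    by (rule nn_cond_exp_intg) auto
  also have "\<dots> = (\<integral>\<^sup>+ x. ennreal \<bar>g x\<bar> \<partial>M)" by simp
  also have "\<dots> = ennreal (\<integral>x. \<bar>g x\<bar> \<partial>M)"
    using assms by (intro nn_integral_eq_integral) auto
  finally show ?thesis by (simp add: ennreal_le_iff)
qed

lemma Q_diff_L1:
  assumes "Z1 \<in> D" "Z2 \<in> D"
  shows "(\<integral>x. \<bar>Q Z1 x - Q Z2 x\<bar> \<partial>M) \<le> (\<integral>x. \<bar>Z1 x - Z2 x\<bar> \<partial>M)"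
proof -
  have i1: "integrable M Z1" and i2: "integrable M Z2" using DZ assms by auto
  have "AE x in M. Q (\<lambda>x. Z1 x - Z2 x) x = Q Z1 x - Q Z2 x"
    by (rule real_cond_exp_diff[OF i1 i2])
  then have "(\<integral>x. \<bar>Q Z1 x - Q Z2 x\<bar> \<partial>M) = (\<integral>x. \<bar>Q (\<lambda>x. Z1 x - Z2 x) x\<bar> \<partial>M)"
    by (intro integral_cong_AE) (auto simp: DQ assms)
  also have "\<dots> \<le> (\<integral>x. \<bar>Z1 x - Z2 x\<bar> \<partial>M)"
    by (rule Q_L1) (use i1 i2 in auto)
  finally show ?thesis .
qed

lemma phi_cont:
  assumes "e > 0"
  shows "\<exists>d>0. \<forall>Z1\<in>D. \<forall>Z2\<in>D. (\<integral>x. \<bar>Z1 x - Z2 x\<bar> \<partial>M) < d \<longrightarrow> \<bar>phi Z1 - phi Z2\<bar> < e"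
proof -
  obtain N where N: "\<forall>Z\<in>D. (\<integral>\<^sup>+ x. ennreal (Q Z x * \<bar>W x\<bar> * indicator {y. \<bar>W y\<bar> > real N} x) \<partial>M) < ennreal (e/3)"
    using tail_enn[of "e/3"] assms by auto
  define d where "d = e / (3 * (real N + 1))"
  have d0: "d > 0" using assms by (simp add: d_def)
  show ?thesis
  proof (intro exI[of _ d] conjI d0 ballI impI)
    fix Z1 Z2 assume Z1: "Z1 \<in> D" and Z2: "Z2 \<in> D" and close: "(\<integral>x. \<bar>Z1 x - Z2 x\<bar> \<partial>M) < d"
    note [measurable] = DQ(1)[OF Z1] DQ(1)[OF Z2]
    define T1 where "T1 = (\<lambda>x. Q Z1 x * \<bar>W x\<bar> * indicator {y. \<bar>W y\<bar> > real N} x)"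
    define T2 where "T2 = (\<lambda>x. Q Z2 x * \<bar>W x\<bar> * indicator {y. \<bar>W y\<bar> > real N} x)"
    have iT1: "integrable M T1" and T1: "integral\<^sup>L M T1 < e/3"
      using tail_int(2,3)[OF Z1 N[rule_format, OF Z1]] unfolding T1_def by auto
    have iT2: "integrable M T2" and T2: "integral\<^sup>L M T2 < e/3"
      using tail_int(2,3)[OF Z2 N[rule_format, OF Z2]] unfolding T2_def by auto
    have iD: "integrable M (\<lambda>x. \<bar>Q Z1 x - Q Z2 x\<bar>)"
      using DQ(2)[OF Z1] DQ(2)[OF Z2] by auto
    have "\<bar>phi Z1 - phi Z2\<bar> = \<bar>\<integral>x. Q Z1 x * W x - Q Z2 x * W x \<partial>M\<bar>"
      unfolding phi_def using int_QW[OF Z1] int_QW[OF Z2] by simp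
    also have "\<dots> \<le> (\<integral>x. \<bar>Q Z1 x * W x - Q Z2 x * W x\<bar> \<partial>M)"
      by (rule integral_abs_bound)
    also have "\<dots> \<le> (\<integral>x. real N * \<bar>Q Z1 x - Q Z2 x\<bar> + T1 x + T2 x \<partial>M)"
    proof (rule integral_mono_AE)
      show "integrable M (\<lambda>x. \<bar>Q Z1 x * W x - Q Z2 x * W x\<bar>)"
        using int_QW[OF Z1] int_QW[OF Z2] by auto
      show "integrable M (\<lambda>x. real N * \<bar>Q Z1 x - Q Z2 x\<bar> + T1 x + T2 x)"
        using iD iT1 iT2 by auto
      show "AE x in M. \<bar>Q Z1 x * W x - Q Z2 x * W x\<bar> \<le> real N * \<bar>Q Z1 x - Q Z2 x\<bar> + T1 x + T2 x"
        using DQ(3)[OF Z1] DQ(3)[OF Z2]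
      proof eventually_elim
        case (elim x)
        have eq: "\<bar>Q Z1 x * W x - Q Z2 x * W x\<bar> = \<bar>Q Z1 x - Q Z2 x\<bar> * \<bar>W x\<bar>"
          by (simp add: abs_mult[symmetric] left_diff_distrib)
        show ?case
        proof (cases "\<bar>W x\<bar> > real N")
          case True
          have "\<bar>Q Z1 x - Q Z2 x\<bar> * \<bar>W x\<bar> \<le> (Q Z1 x + Q Z2 x) * \<bar>W x\<bar>"
            using elim by (intro mult_right_mono) auto
          moreover have "0 \<le> real N * \<bar>Q Z1 x - Q Z2 x\<bar>" by simp
          moreover have "T1 x + T2 x = (Q Z1 x + Q Z2 x) * \<bar>W x\<bar>"
            using True by (simp add: T1_def T2_def algebra_simps)
          ultimately show ?thesis unfolding eq by linarith
        next
          case False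
          have "\<bar>Q Z1 x - Q Z2 x\<bar> * \<bar>W x\<bar> \<le> \<bar>Q Z1 x - Q Z2 x\<bar> * real N"
            using False by (intro mult_left_mono) auto
          moreover have "T1 x \<ge> 0" "T2 x \<ge> 0" using elim unfolding T1_def T2_def by auto
          ultimately show ?thesis unfolding eq by (simp add: algebra_simps)
        qed
      qed
    qed
    also have "\<dots> = real N * (\<integral>x. \<bar>Q Z1 x - Q Z2 x\<bar> \<partial>M) + integral\<^sup>L M T1 + integral\<^sup>L M T2"
      using iD iT1 iT2 by simp
    also have "\<dots> < e"
    proof -
      have "(\<integral>x. \<bar>Q Z1 x - Q Z2 x\<bar> \<partial>M) < d"
        using Q_diff_L1[OF Z1 Z2] close by linarith
      then have "real N * (\<integral>x. \<bar>Q Z1 x - Q Z2 x\<bar> \<partial>M) \<le> real N * d"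
        by (intro mult_left_mono) auto
      also have "real N * d \<le> e / 3"
        using assms unfolding d_def by (simp add: field_simps)
      finally show ?thesis using T1 T2 by linarith
    qed
    finally show "\<bar>phi Z1 - phi Z2\<bar> < e" .
  qed
qed

abbreviation mid where "mid Z1 Z2 \<equiv> (\<lambda>x. (Z1 x + Z2 x) / 2)"

lemma phi_mid:
  assumes Z1: "Z1 \<in> D" and Z2: "Z2 \<in> D"
  shows "phi (mid Z1 Z2) = (phi Z1 + phi Z2) / 2"
proof -
  have i1: "integrable M Z1" and i2: "integrable M Z2" using DZ assms by auto
  have "AE x in M. Q (mid Z1 Z2) x = Q (\<lambda>x. Z1 x + Z2 x) x / 2"
    by (rule real_cond_exp_cdiv) (use i1 i2 in auto)
  moreover have "AE x in M. Q (\<lambda>x. Z1 x + Z2 x) x = Q Z1 x + Q Z2 x"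
    by (rule real_cond_exp_add[OF i1 i2])
  ultimately have ae: "AE x in M. Q (mid Z1 Z2) x * W x = (Q Z1 x * W x + Q Z2 x * W x) / 2"
    by eventually_elim (simp add: field_simps)
  have "phi (mid Z1 Z2) = (\<integral>x. (Q Z1 x * W x + Q Z2 x * W x) / 2 \<partial>M)"
    unfolding phi_def
    by (rule integral_cong_AE) (use ae DQ(1)[OF Z1] DQ(1)[OF Z2] in auto)
  also have "\<dots> = (phi Z1 + phi Z2) / 2"
    unfolding phi_def using int_QW[OF Z1] int_QW[OF Z2] by simp
  finally show ?thesis .
qed

definition H where "H Z = (\<integral>x. hf (Z x) \<partial>M)"

lemma hf_bounds: "0 \<le> hf t" "hf t \<le> 1"
  unfolding hf_def by auto

lemma hf_meas[measurable]: "hf \<in> borel_measurable borel"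
  unfolding hf_def by measurable

lemma int_hf:
  assumes [measurable]: "Z \<in> borel_measurable M"
  shows "integrable M (\<lambda>x. hf (Z x))"
proof (rule integrable_const_bound[where B=1])
  show "AE x in M. norm (hf (Z x)) \<le> 1" using hf_bounds by (simp add: abs_le_iff)
qed measurable

lemma H_bounds: "Z \<in> borel_measurable M \<Longrightarrow> 0 \<le> H Z \<and> H Z \<le> 1"
proof -
  assume Z[measurable]: "Z \<in> borel_measurable M"
  have "0 \<le> H Z" unfolding H_def by (rule integral_nonneg_AE) (auto simp: hf_bounds)
  moreover have "H Z \<le> (\<integral>x. 1 \<partial>M)" unfolding H_def
    by (rule integral_mono) (auto simp: int_hf hf_bounds)
  ultimately show ?thesis by (simp add: P.prob_space)
qed

lemma gap_eq:
  assumes Z1: "Z1 \<in> D" and Z2: "Z2 \<in> D"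
  shows "(H Z1 + H Z2) / 2 - H (mid Z1 Z2) = (\<integral>x. gg (Z1 x) (Z2 x) \<partial>M)"
proof -
  note [measurable] = DZ(1)[OF Z1] DZ(1)[OF Z2]
  show ?thesis unfolding H_def gg_def
    using int_hf[of Z1] int_hf[of Z2] int_hf[of "mid Z1 Z2"] by simp
qed

lemma UI_real:
  assumes "e > 0"
  shows "\<exists>K\<ge>0. \<forall>Z\<in>D. (\<integral>x. \<bar>Z x\<bar> * indicator {y. \<bar>Z y\<bar> > K} x \<partial>M) < e"
proof -
  have "eventually (\<lambda>n::nat. (SUP Z\<in>D. \<integral>\<^sup>+ x. ennreal (\<bar>Z x\<bar> * indicator {y. \<bar>Z y\<bar> > real n} x) \<partial>M) < ennreal e) sequentially"
    using order_tendstoD(2)[OF D_UI[unfolded unif_integrable_def]] assms by simp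
  then obtain N where NN: "(SUP Z\<in>D. \<integral>\<^sup>+ x. ennreal (\<bar>Z x\<bar> * indicator {y. \<bar>Z y\<bar> > real N} x) \<partial>M) < ennreal e"
    by (auto simp: eventually_sequentially)
  have "\<forall>Z\<in>D. (\<integral>x. \<bar>Z x\<bar> * indicator {y. \<bar>Z y\<bar> > real N} x \<partial>M) < e"
  proof
    fix Z assume Z: "Z \<in> D"
    note [measurable] = DZ(1)[OF Z]
    have lt: "(\<integral>\<^sup>+ x. ennreal (\<bar>Z x\<bar> * indicator {y. \<bar>Z y\<bar> > real N} x) \<partial>M) < ennreal e"
      by (rule le_less_trans[OF SUP_upper[OF Z] NN])
    have int: "integrable M (\<lambda>x. \<bar>Z x\<bar> * indicator {y. \<bar>Z y\<bar> > real N} x)"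
      by (rule Bochner_Integration.integrable_bound[OF integrable_norm[OF DZ(2)[OF Z]]])
        (auto simp: indicator_def)
    have "ennreal (\<integral>x. \<bar>Z x\<bar> * indicator {y. \<bar>Z y\<bar> > real N} x \<partial>M) = (\<integral>\<^sup>+ x. ennreal (\<bar>Z x\<bar> * indicator {y. \<bar>Z y\<bar> > real N} x) \<partial>M)"
      using int by (intro nn_integral_eq_integral[symmetric]) auto
    with lt show "(\<integral>x. \<bar>Z x\<bar> * indicator {y. \<bar>Z y\<bar> > real N} x \<partial>M) < e"
      by (intro ennreal_less_imp) simp
  qed
  then show ?thesis by (intro exI[of _ "real N"]) auto
qed

lemma cauchy_gap:
  assumes "e > 0"
  shows "\<exists>\<gamma>>0. \<forall>Z1\<in>D. \<forall>Z2\<in>D. (H Z1 + H Z2) / 2 - H (mid Z1 Z2) < \<gamma> \<longrightarrow> (\<integral>x. \<bar>Z1 x - Z2 x\<bar> \<partial>M) < e"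
proof -
  obtain K where K0: "K \<ge> 0" and K: "\<forall>Z\<in>D. (\<integral>x. \<bar>Z x\<bar> * indicator {y. \<bar>Z y\<bar> > K} x \<partial>M) < e / 4"
    using UI_real[of "e/4"] assms by auto
  define d where "d = e / 4"
  define c where "c = 4 * (1 + K)^3 / d"
  have d0: "d > 0" using assms by (simp add: d_def)
  have c0: "c > 0" using d0 K0 by (simp add: c_def)
  define \<gamma> where "\<gamma> = (e / 4) / c"
  have g0: "\<gamma> > 0" using c0 assms by (simp add: \<gamma>_def)
  show ?thesis
  proof (intro exI[of _ \<gamma>] conjI g0 ballI impI)
    fix Z1 Z2 assume Z1: "Z1 \<in> D" and Z2: "Z2 \<in> D" and gap: "(H Z1 + H Z2) / 2 - H (mid Z1 Z2) < \<gamma>"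
    note [measurable] = DZ(1)[OF Z1] DZ(1)[OF Z2]
    define U1 where "U1 = (\<lambda>x. \<bar>Z1 x\<bar> * indicator {y. \<bar>Z1 y\<bar> > K} x)"
    define U2 where "U2 = (\<lambda>x. \<bar>Z2 x\<bar> * indicator {y. \<bar>Z2 y\<bar> > K} x)"
    have iU1: "integrable M U1" unfolding U1_def
      by (rule Bochner_Integration.integrable_bound[OF integrable_norm[OF DZ(2)[OF Z1]]])
        (auto simp: indicator_def)
    have iU2: "integrable M U2" unfolding U2_def
      by (rule Bochner_Integration.integrable_bound[OF integrable_norm[OF DZ(2)[OF Z2]]])
        (auto simp: indicator_def)
    have ig: "integrable M (\<lambda>x. gg (Z1 x) (Z2 x))"
      unfolding gg_def using int_hf[of Z1] int_hf[of Z2] int_hf[of "mid Z1 Z2"] by simp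
    have "(\<integral>x. \<bar>Z1 x - Z2 x\<bar> \<partial>M) \<le> (\<integral>x. U1 x + U2 x + d + c * gg (Z1 x) (Z2 x) \<partial>M)"
    proof (rule integral_mono_AE)
      show "integrable M (\<lambda>x. \<bar>Z1 x - Z2 x\<bar>)" using DZ(2)[OF Z1] DZ(2)[OF Z2] by auto
      show "integrable M (\<lambda>x. U1 x + U2 x + d + c * gg (Z1 x) (Z2 x))"
        using iU1 iU2 ig by auto
      show "AE x in M. \<bar>Z1 x - Z2 x\<bar> \<le> U1 x + U2 x + d + c * gg (Z1 x) (Z2 x)"
        using DZ(3)[OF Z1] DZ(3)[OF Z2]
      proof eventually_elim
        case (elim x)
        have e1: "U1 x = \<bar>Z1 x\<bar> * (if \<bar>Z1 x\<bar> > K then 1 else 0)" by (simp add: U1_def indicator_def)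
        have e2: "U2 x = \<bar>Z2 x\<bar> * (if \<bar>Z2 x\<bar> > K then 1 else 0)" by (simp add: U2_def indicator_def)
        show ?case unfolding e1 e2 c_def by (rule key_pointwise[OF elim K0 d0])
      qed
    qed
    also have "\<dots> = integral\<^sup>L M U1 + integral\<^sup>L M U2 + d + c * (\<integral>x. gg (Z1 x) (Z2 x) \<partial>M)"
      using iU1 iU2 ig by (simp add: P.prob_space)
    also have "\<dots> < e"
    proof -
      have "integral\<^sup>L M U1 < e / 4" "integral\<^sup>L M U2 < e / 4"
        using K Z1 Z2 unfolding U1_def U2_def by auto
      moreover have "c * (\<integral>x. gg (Z1 x) (Z2 x) \<partial>M) < c * \<gamma>"
        using gap gap_eq[OF Z1 Z2] c0 by simp
      moreover have "c * \<gamma> = e / 4" using c0 by (simp add: \<gamma>_def)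
      ultimately show ?thesis unfolding d_def by linarith
    qed
    finally show "(\<integral>x. \<bar>Z1 x - Z2 x\<bar> \<partial>M) < e" .
  qed
qed

lemma exists_min: "\<exists>f\<in>D. \<forall>Z\<in>D. phi f \<le> phi Z"
proof -
  obtain B where B: "\<forall>Z\<in>D. \<bar>phi Z\<bar> \<le> B" using phi_bound by blast
  have bddP: "bdd_below (phi ` D)"
  proof (rule bdd_belowI[of _ "-B"])
    fix x assume "x \<in> phi ` D"
    then obtain Z where "Z \<in> D" "x = phi Z" by blast
    then show "- B \<le> x" using B by (auto simp: abs_le_iff)
  qed
  define m where "m = Inf (phi ` D)"
  have m_le: "\<And>Z. Z \<in> D \<Longrightarrow> m \<le> phi Z" unfolding m_def using bddP by (simp add: cInf_lower)
  define eps :: "nat \<Rightarrow> real" where "eps k = 1 / (real k + 1)" for k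
  have eps0: "\<And>k. eps k > 0" by (simp add: eps_def)
  have eps_mono: "\<And>k l. k \<le> l \<Longrightarrow> eps l \<le> eps k"
    by (simp add: eps_def frac_le)
  define C where "C k = {Z\<in>D. phi Z \<le> m + eps k}" for k
  have C_ne: "C k \<noteq> {}" for k
  proof -
    have "Inf (phi ` D) < m + eps k" using eps0[of k] by (simp add: m_def)
    then obtain v where "v \<in> phi ` D" "v < m + eps k" using cInf_lessD[of "phi ` D"] D_ne by blast
    then show ?thesis unfolding C_def by force
  qed
  have C_D: "C k \<subseteq> D" for k unfolding C_def by auto
  have H01: "\<And>Z. Z \<in> D \<Longrightarrow> 0 \<le> H Z \<and> H Z \<le> 1" using H_bounds DZ(1) by blast
  have bddH: "bdd_below (H ` C k)" for k
  proof (rule bdd_belowI[of _ 0])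
    fix x assume "x \<in> H ` C k"
    then obtain Z where "Z \<in> C k" "x = H Z" by blast
    then show "0 \<le> x" using H01 C_D by blast
  qed
  define c where "c k = Inf (H ` C k)" for k
  have c_mono: "c k \<le> c l" if "k \<le> l" for k l
  proof -
    have "C l \<subseteq> C k" unfolding C_def using eps_mono[OF that] by auto
    then show ?thesis unfolding c_def using C_ne[of l] bddH[of k] by (intro cInf_superset_mono) auto
  qed
  have c_le1: "c k \<le> 1" for k
  proof -
    obtain Z where "Z \<in> C k" using C_ne by blast
    then have "c k \<le> H Z" unfolding c_def using bddH by (simp add: cInf_lower)
    then show ?thesis using H01 C_D \<open>Z \<in> C k\<close> by force
  qed
  have c_low: "c k \<le> H Z" if "Z \<in> C k" for k Z
    unfolding c_def using bddH[of k] that by (intro cInf_lower) auto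
  have "\<forall>k. \<exists>Z. Z \<in> C k \<and> H Z < c k + eps k"
  proof
    fix k
    have "Inf (H ` C k) < c k + eps k" using eps0[of k] by (simp add: c_def)
    moreover have ne: "H ` C k \<noteq> {}" using C_ne[of k] by simp
    ultimately obtain v where "v \<in> H ` C k" "v < c k + eps k" using cInf_lessD[of "H ` C k" "c k + eps k"] by blast
    moreover from \<open>v \<in> H ` C k\<close> obtain Z where "Z \<in> C k" "v = H Z" by blast
    ultimately show "\<exists>Z. Z \<in> C k \<and> H Z < c k + eps k" by blast
  qed
  from choice[OF this] obtain Zs where ZsH: "\<forall>k. Zs k \<in> C k \<and> H (Zs k) < c k + eps k" by blast
  have Zs: "\<And>k. Zs k \<in> C k" and HZs: "\<And>k. H (Zs k) < c k + eps k" using ZsH by auto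
  have ZsD: "\<And>k. Zs k \<in> D" using Zs C_D by blast
  obtain L where cL: "c \<longlonglongrightarrow> L" and cleL: "\<forall>i. c i \<le> L"
  proof -
    have "incseq c" by (rule incseq_SucI) (simp add: c_mono)
    from incseq_convergent[OF this, of 1] c_le1 show ?thesis using that by blast
  qed
  have gap_small: "\<exists>n. \<forall>j\<ge>n. \<forall>k\<ge>n. (H (Zs j) + H (Zs k)) / 2 - H (mid (Zs j) (Zs k)) < e" if e0: "e > 0" for e
  proof -
    obtain n1 where n1: "\<forall>i\<ge>n1. \<bar>c i - L\<bar> < e / 2"
      using cL[unfolded LIMSEQ_def, rule_format, of "e/2"] e0 by (auto simp: dist_real_def)
    obtain n2 :: nat where n2: "real n2 > 2 / e" using reals_Archimedean2 by blast
    define n where "n = max n1 n2"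
    have epsn: "eps n < e / 2"
    proof -
      have "real n \<ge> real n2" unfolding n_def by simp
      then have "real n + 1 > 2 / e" using n2 by linarith
      then have "1 / (real n + 1) < e / 2" using e0
        by (simp add: field_simps)
      then show ?thesis by (simp add: eps_def)
    qed
    have "\<forall>j\<ge>n. \<forall>k\<ge>n. (H (Zs j) + H (Zs k)) / 2 - H (mid (Zs j) (Zs k)) < e"
    proof (intro allI impI)
      fix j k assume jn: "j \<ge> n" and kn: "k \<ge> n"
      have midD: "mid (Zs j) (Zs k) \<in> D" using D_mid ZsD by blast
      have "phi (mid (Zs j) (Zs k)) = (phi (Zs j) + phi (Zs k)) / 2" by (rule phi_mid[OF ZsD ZsD])
      also have "\<dots> \<le> m + eps n"
        using Zs[of j] Zs[of k] eps_mono[OF jn] eps_mono[OF kn] unfolding C_def by auto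
      finally have midC: "mid (Zs j) (Zs k) \<in> C n" using midD unfolding C_def by auto
      define hm where "hm = H (mid (Zs j) (Zs k))"
      have "c n \<le> hm" unfolding hm_def by (rule c_low[OF midC])
      moreover have "H (Zs j) < L + eps n" using HZs[of j] cleL[rule_format, of j] eps_mono[OF jn] by linarith
      moreover have "H (Zs k) < L + eps n" using HZs[of k] cleL[rule_format, of k] eps_mono[OF kn] by linarith
      moreover have "L - c n < e / 2"
      proof -
        have "n \<ge> n1" unfolding n_def by simp
        then have "\<bar>c n - L\<bar> < e / 2" using n1 by blast
        then show ?thesis by linarith
      qed
      ultimately have "H (Zs j) + H (Zs k) - 2 * hm < 2 * e" using epsn by linarith
      then show "(H (Zs j) + H (Zs k)) / 2 - H (mid (Zs j) (Zs k)) < e" by (simp add: hm_def field_simps)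
    qed
    then show ?thesis by blast
  qed
  have L1cau: "\<exists>N. \<forall>i\<ge>N. \<forall>j\<ge>N. (\<integral>x. \<bar>Zs i x - Zs j x\<bar> \<partial>M) < e" if e0: "e > 0" for e
  proof -
    obtain \<gamma> where g0: "\<gamma> > 0" and g: "\<forall>Z1\<in>D. \<forall>Z2\<in>D. (H Z1 + H Z2) / 2 - H (mid Z1 Z2) < \<gamma> \<longrightarrow> (\<integral>x. \<bar>Z1 x - Z2 x\<bar> \<partial>M) < e"
      using cauchy_gap[OF e0] by blast
    obtain n where "\<forall>j\<ge>n. \<forall>k\<ge>n. (H (Zs j) + H (Zs k)) / 2 - H (mid (Zs j) (Zs k)) < \<gamma>"
      using gap_small[OF g0] by blast
    then show ?thesis
    proof (intro exI[of _ n] allI impI)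
      fix i j assume nb: "\<forall>j\<ge>n. \<forall>k\<ge>n. (H (Zs j) + H (Zs k)) / 2 - H (mid (Zs j) (Zs k)) < \<gamma>"
        and i: "i \<ge> n" and j: "j \<ge> n"
      have "(H (Zs i) + H (Zs j)) / 2 - H (mid (Zs i) (Zs j)) < \<gamma>" using nb i j by blast
      then show "(\<integral>x. \<bar>Zs i x - Zs j x\<bar> \<partial>M) < e" using g ZsD[of i] ZsD[of j] by blast
    qed
  qed
  obtain r f where r: "strict_mono r" and fm: "f \<in> borel_measurable M"
    and fconv: "(\<lambda>k. \<integral>\<^sup>+ x. ennreal \<bar>Zs (r k) x - f x\<bar> \<partial>M) \<longlonglongrightarrow> 0"
    by (rule L1_complete_subseq[of M Zs, OF DZ(2)[OF ZsD] L1cau])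
  have fD: "f \<in> D"
    using spec[where x=f, OF spec[where x="\<lambda>k. Zs (r k)", OF D_closed[unfolded L1_closed_def]]] ZsD fm fconv by simp
  have "phi f \<le> m"
  proof (rule field_le_epsilon)
    fix e :: real assume e0: "e > 0"
    obtain d where d0: "d > 0" and d: "\<forall>Z1\<in>D. \<forall>Z2\<in>D. (\<integral>x. \<bar>Z1 x - Z2 x\<bar> \<partial>M) < d \<longrightarrow> \<bar>phi Z1 - phi Z2\<bar> < e / 2"
      using phi_cont[of "e/2"] e0 by auto
    have "eventually (\<lambda>k. (\<integral>\<^sup>+ x. ennreal \<bar>Zs (r k) x - f x\<bar> \<partial>M) < ennreal d) sequentially"
      using order_tendstoD(2)[OF fconv] d0 by simp
    then obtain n1 where n1: "\<forall>k\<ge>n1. (\<integral>\<^sup>+ x. ennreal \<bar>Zs (r k) x - f x\<bar> \<partial>M) < ennreal d"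
      by (auto simp: eventually_sequentially)
    obtain n2 :: nat where n2: "real n2 > 2 / e" using reals_Archimedean2 by blast
    define k where "k = max n1 n2"
    have rk: "r k \<ge> k" using seq_suble[OF r] by blast
    have epsk: "eps (r k) < e / 2"
    proof -
      have "real (r k) \<ge> real n2" using rk unfolding k_def by simp
      then have "real (r k) + 1 > 2 / e" using n2 by linarith
      then have "1 / (real (r k) + 1) < e / 2" using e0
        by (simp add: field_simps)
      then show ?thesis by (simp add: eps_def)
    qed
    have "ennreal (\<integral>x. \<bar>Zs (r k) x - f x\<bar> \<partial>M) = (\<integral>\<^sup>+ x. ennreal \<bar>Zs (r k) x - f x\<bar> \<partial>M)"
      using DZ(2)[OF ZsD[of "r k"]] DZ(2)[OF fD] by (intro nn_integral_eq_integral[symmetric]) auto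
    also have "\<dots> < ennreal d" using n1 unfolding k_def by simp
    finally have "(\<integral>x. \<bar>Zs (r k) x - f x\<bar> \<partial>M) < d" by (rule ennreal_less_imp)
    then have "\<bar>phi (Zs (r k)) - phi f\<bar> < e / 2" using d ZsD fD by blast
    moreover have "phi (Zs (r k)) \<le> m + eps (r k)" using Zs[of "r k"] unfolding C_def by simp
    ultimately show "phi f \<le> m + e" using epsk by linarith
  qed
  then show ?thesis using fD m_le by (meson order_trans)
qed

lemma EQ_phi:
  assumes Z: "Z \<in> D"
  shows "EQ M (Q Z) W = ereal (phi Z)"
proof -
  note [measurable] = DQ(1)[OF Z]
  have iQW: "integrable M (\<lambda>x. Q Z x * W x)" by (rule int_QW[OF Z])
  have pos: "AE x in M. 0 \<le> Q Z x" by (rule DQ(3)[OF Z])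
  have ip: "integrable M (\<lambda>x. Q Z x * max (W x) 0)"
    by (rule Bochner_Integration.integrable_bound[OF iQW]) (auto simp: abs_mult intro!: mult_left_mono)
  have in': "integrable M (\<lambda>x. Q Z x * max (- W x) 0)"
    by (rule Bochner_Integration.integrable_bound[OF iQW]) (auto simp: abs_mult intro!: mult_left_mono)
  have pe: "(\<integral>\<^sup>+ x. ennreal (Q Z x * max (W x) 0) \<partial>M) = ennreal (\<integral>x. Q Z x * max (W x) 0 \<partial>M)"
    using pos ip by (intro nn_integral_eq_integral) (auto elim!: eventually_mono)
  have ne: "(\<integral>\<^sup>+ x. ennreal (Q Z x * max (- W x) 0) \<partial>M) = ennreal (\<integral>x. Q Z x * max (- W x) 0 \<partial>M)"
    using pos in' by (intro nn_integral_eq_integral) (auto elim!: eventually_mono)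
  have A0: "(\<integral>x. Q Z x * max (W x) 0 \<partial>M) \<ge> 0"
    using pos by (intro integral_nonneg_AE) (auto elim!: eventually_mono)
  have B0: "(\<integral>x. Q Z x * max (- W x) 0 \<partial>M) \<ge> 0"
    using pos by (intro integral_nonneg_AE) (auto elim!: eventually_mono)
  have "EQ M (Q Z) W = ereal (\<integral>x. Q Z x * max (W x) 0 \<partial>M) - ereal (\<integral>x. Q Z x * max (- W x) 0 \<partial>M)"
    unfolding EQ_alt pe ne using A0 B0 by (simp add: enn2ereal_ennreal)
  also have "\<dots> = ereal ((\<integral>x. Q Z x * max (W x) 0 \<partial>M) - (\<integral>x. Q Z x * max (- W x) 0 \<partial>M))"
    by simp
  also have "(\<integral>x. Q Z x * max (W x) 0 \<partial>M) - (\<integral>x. Q Z x * max (- W x) 0 \<partial>M) = (\<integral>x. Q Z x * max (W x) 0 - Q Z x * max (- W x) 0 \<partial>M)"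
    using ip in' by simp
  also have "\<dots> = phi Z" unfolding phi_def
    by (rule Bochner_Integration.integral_cong) (auto simp: max_def algebra_simps)
  finally show ?thesis .
qed

end

theorem proposition6p2:
  fixes M :: "'a measure" and u :: "('a \<Rightarrow> real) \<Rightarrow> ereal"
    and Y :: "'a \<Rightarrow> 'b::euclidean_space" and W :: "'a \<Rightarrow> real"
  assumes "prob_space M"
    and "coherent_utility M u"
    and "D = determining_set M u"
    and "L1_closed M D"
    and "unif_integrable M D"
    and "Y \<in> borel_measurable M"
    and "W \<in> L1s M (cond_set M D Y)"
  shows "extreme_set M D Y W \<noteq> {}"
proof -
  define F where "F = vimage_algebra (space M) Y borel"
  interpret P: prob_space M by (rule assms(1))
  have sub: "subalgebra M F"
    unfolding subalgebra_def F_def using sets_image_in_sets[of M "space M" Y borel] assms(6) by auto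
  have fms: "finite_measure_subalgebra M F"
    unfolding finite_measure_subalgebra_def finite_measure_subalgebra_axioms_def
    using sub P.finite_measure_axioms by simp
  have Dsub: "D \<subseteq> Pset M" using assms(3) by (auto simp: determining_set_def)
  obtain D' where D': "D' \<noteq> {}" "D' \<subseteq> Pset M" "\<forall>X \<in> borel_measurable M. u X = (INF Q\<in>D'. EQ M Q X)"
    using assms(2) unfolding coherent_utility_def by blast
  have Dne: "D \<noteq> {}"
  proof -
    obtain Q where Q: "Q \<in> D'" using D'(1) by blast
    have "\<forall>X \<in> borel_measurable M. u X \<le> EQ M Q X"
      using D'(3) Q by (auto intro: INF_lower)
    then have "Q \<in> D" using assms(3) Q D'(2) by (auto simp: determining_set_def)
    then show ?thesis by blast
  qed
  have Dmid: "\<And>Z1 Z2. Z1 \<in> D \<Longrightarrow> Z2 \<in> D \<Longrightarrow> (\<lambda>x. (Z1 x + Z2 x) / 2) \<in> D"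
    using det_mid assms(3) by blast
  have Wm: "W \<in> borel_measurable M" using assms(7) by (simp add: L1s_def)
  have Wt: "(\<lambda>n::nat. SUP Z\<in>D. \<integral>\<^sup>+ x. ennreal (real_cond_exp M F Z x * \<bar>W x\<bar> * indicator {y. \<bar>W y\<bar> > real n} x) \<partial>M) \<longlonglongrightarrow> 0"
    using assms(7) unfolding L1s_def cond_set_def F_def by (simp add: image_image)
  have SS: "S M F D W"
    unfolding S_def S_axioms_def using fms assms(1,4,5) Dsub Dne Dmid Wm Wt by blast
  interpret S M F D W by (rule SS)
  obtain f where fD: "f \<in> D" and fmin: "\<forall>Z\<in>D. phi f \<le> phi Z" using exists_min by blast
  have cs: "cond_set M D Y = real_cond_exp M F ` D" by (simp add: cond_set_def F_def)
  have ufv: "uf M D W Y = ereal (phi f)"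
  proof -
    have "uf M D W Y = (INF Z\<in>D. EQ M (real_cond_exp M F Z) W)"
      unfolding uf_def cs by (simp add: image_image)
    also have "\<dots> = (INF Z\<in>D. ereal (phi Z))"
      using EQ_phi by (intro INF_cong) auto
    also have "\<dots> = ereal (phi f)"
    proof (rule antisym)
      show "(INF Z\<in>D. ereal (phi Z)) \<le> ereal (phi f)" by (rule INF_lower[OF fD])
      show "ereal (phi f) \<le> (INF Z\<in>D. ereal (phi Z))" using fmin by (auto intro: INF_greatest)
    qed
    finally show ?thesis .
  qed
  have "real_cond_exp M F f \<in> extreme_set M D Y W"
    unfolding extreme_set_def using fD cs ufv EQ_phi[OF fD] by auto
  then show ?thesis by blast
qed

end
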